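(* Let $X$ be an operator on $(\mathbb C^d)^{\otimes n}$ that commutes with $P(\pi)$ for every permutation $\pi\in\mathfrak S_n$, where $P(\pi)|\psi_1\rangle\otimes\cdots\otimes|\psi_n\rangle=|\psi_{\pi^{-1}(1)}\rangle\otimes\cdots\otimes|\psi_{\pi^{-1}(n)}\rangle$. Then the number of distinct eigenvalues of $X$ satisfies $|\mathrm{spec}(X)|\le(n+1)^d(n+d)^{d^2}$. *)

theory Defs
  imports "HOL-Analysis.Analysis" "HOL-Combinatorics.Permutations"
begin

text \<open>Computational basis of (C^d)^(tensor n): words w with w i < d for i < n
  (and w i = 0 for i \<ge> n, to make the representation canonical).
  Basis vector e_w corresponds to e_{w 0} \<otimes> ... \<otimes> e_{w (n-1)}.\<close>
definition words :: "nat \<Rightarrow> nat \<Rightarrow> (nat \<Rightarrow> nat) set" where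
  "words n d = {w. (\<forall>i<n. w i < d) \<and> (\<forall>i\<ge>n. w i = 0)}"

text \<open>An operator on (C^d)^(tensor n) is given by its matrix entries X a b
  (a, b basis words); only entries on words n d matter.\<close>
type_synonym op = "(nat \<Rightarrow> nat) \<Rightarrow> (nat \<Rightarrow> nat) \<Rightarrow> complex"

text \<open>Permutation operator: P(pi) e_w = e_{w \<circ> pi^{-1}}, i.e. the tensor factor in
  position i is the one previously at position pi^{-1}(i).\<close>
definition perm_op :: "(nat \<Rightarrow> nat) \<Rightarrow> op" where
  "perm_op \<pi> a b = (if a = b \<circ> inv \<pi> then 1 else 0)"

definition op_mult :: "nat \<Rightarrow> nat \<Rightarrow> op \<Rightarrow> op \<Rightarrow> op" where
  "op_mult n d A B a b = (\<Sum>u\<in>words n d. A a u * B u b)"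

definition spec :: "nat \<Rightarrow> nat \<Rightarrow> op \<Rightarrow> complex set" where
  "spec n d X = {c. \<exists>v :: (nat \<Rightarrow> nat) \<Rightarrow> complex.
      (\<exists>w\<in>words n d. v w \<noteq> 0) \<and>
      (\<forall>a\<in>words n d. (\<Sum>u\<in>words n d. X a u * v u) = c * v a)}"

end

theory Submission
  imports Defs
begin

lemma dep_lemma:
  fixes f :: "'k \<Rightarrow> 'x \<Rightarrow> complex"
  assumes "finite Q" "finite K" "card Q < card K"
  shows "\<exists>c. (\<exists>k\<in>K. c k \<noteq> 0) \<and> (\<forall>x\<in>Q. (\<Sum>k\<in>K. c k * f k x) = 0)"
  using assms
proof (induction Q arbitrary: K f rule: finite_induct)
  case empty
  then have "K \<noteq> {}" by auto
  then show ?case by (intro exI[of _ "\<lambda>_. 1"]) auto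
next
  case (insert x0 Q)
  show ?case
  proof (cases "\<forall>k\<in>K. f k x0 = 0")
    case True
    from insert.IH[of K f] insert.prems insert.hyps obtain c where
      c: "\<exists>k\<in>K. c k \<noteq> 0" "\<forall>x\<in>Q. (\<Sum>k\<in>K. c k * f k x) = 0" by auto
    show ?thesis using c True by (intro exI[of _ c]) auto
  next
    case False
    then obtain j where j: "j \<in> K" "f j x0 \<noteq> 0" by auto
    define g where "g k x = f k x - f k x0 / f j x0 * f j x" for k x
    have cK: "card Q < card (K - {j})" using insert.prems insert.hyps j by auto
    from insert.IH[of "K - {j}" g] cK insert.prems obtain b where
      b: "\<exists>k\<in>K-{j}. b k \<noteq> 0" "\<forall>x\<in>Q. (\<Sum>k\<in>K-{j}. b k * g k x) = 0" by auto
    define s where "s = (\<Sum>k\<in>K-{j}. b k * f k x0)"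
    define c where "c = b(j := - s / f j x0)"
    have split: "(\<Sum>k\<in>K. c k * f k x) = c j * f j x + (\<Sum>k\<in>K-{j}. b k * f k x)" for x
    proof -
      have "(\<Sum>k\<in>K. c k * f k x) = c j * f j x + (\<Sum>k\<in>K-{j}. c k * f k x)"
        using j insert.prems by (simp add: sum.remove)
      also have "(\<Sum>k\<in>K-{j}. c k * f k x) = (\<Sum>k\<in>K-{j}. b k * f k x)"
        by (rule sum.cong) (auto simp: c_def)
      finally show ?thesis .
    qed
    have g_exp: "(\<Sum>k\<in>K-{j}. b k * f k x) = (\<Sum>k\<in>K-{j}. b k * g k x) + s / f j x0 * f j x" for x
    proof -
      have "(\<Sum>k\<in>K-{j}. b k * f k x) = (\<Sum>k\<in>K-{j}. b k * g k x + (b k * f k x0) * (f j x / f j x0))"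
        by (rule sum.cong) (auto simp: g_def field_simps j)
      also have "\<dots> = (\<Sum>k\<in>K-{j}. b k * g k x) + s * (f j x / f j x0)"
        by (simp add: sum.distrib sum_distrib_right s_def del: times_divide_eq_right times_divide_eq_left)
      finally show ?thesis by simp
    qed
    have "\<forall>x\<in>insert x0 Q. (\<Sum>k\<in>K. c k * f k x) = 0"
    proof
      fix x assume "x \<in> insert x0 Q"
      then show "(\<Sum>k\<in>K. c k * f k x) = 0"
      proof
        assume "x = x0" then show ?thesis using j unfolding split by (simp add: c_def s_def[symmetric])
      next
        assume "x \<in> Q" then show ?thesis using j b(2) unfolding split g_exp by (simp add: c_def)
      qed
    qed
    moreover have "\<exists>k\<in>K. c k \<noteq> 0" using b(1) by (auto simp: c_def)
    ultimately show ?thesis by blast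
  qed
qed

lemma words_comp:
  assumes "\<pi> permutes {..<n}" "w \<in> words n d"
  shows "w \<circ> \<pi> \<in> words n d"
  using assms permutes_in_image[OF assms(1)] permutes_not_in[OF assms(1)]
  unfolding words_def by auto

lemma finite_words: "finite (words n d)"
proof (induction n)
  case 0
  have "words 0 d \<subseteq> {\<lambda>_. 0}" by (auto simp: words_def)
  then show ?case using finite_subset by blast
next
  case (Suc n)
  have "words (Suc n) d \<subseteq> (\<lambda>(x,w). w(n:=x)) ` ({..<d} \<times> words n d)"
  proof
    fix w assume w: "w \<in> words (Suc n) d"
    have "w = (w(n:=0))(n := w n)" by simp
    moreover have "w(n:=0) \<in> words n d" using w by (auto simp: words_def)
    moreover have "w n < d" using w by (auto simp: words_def)
    ultimately show "w \<in> (\<lambda>(x,w). w(n:=x)) ` ({..<d} \<times> words n d)"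
      by (intro image_eqI[of _ _ "(w n, w(n:=0))"]) auto
  qed
  then show ?case using Suc finite_subset by blast
qed

lemma bij_comp:
  assumes "\<pi> permutes {..<n}"
  shows "bij_betw (\<lambda>u. u \<circ> \<pi>) (words n d) (words n d)"
proof (rule bij_betw_byWitness[where f'="\<lambda>u. u \<circ> inv \<pi>"])
  have pi: "inv \<pi> permutes {..<n}" using permutes_inv[OF assms] .
  show "\<forall>a\<in>words n d. a \<circ> \<pi> \<circ> inv \<pi> = a"
    using permutes_inv_o[OF assms] by (simp add: comp_assoc)
  show "\<forall>a'\<in>words n d. a' \<circ> inv \<pi> \<circ> \<pi> = a'"
    using permutes_inv_o[OF assms] by (simp add: comp_assoc)
  show "(\<lambda>u. u \<circ> \<pi>) ` words n d \<subseteq> words n d" using words_comp[OF assms] by auto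
  show "(\<lambda>u. u \<circ> inv \<pi>) ` words n d \<subseteq> words n d" using words_comp[OF pi] by auto
qed

lemma invariance:
  fixes X :: op
  assumes "\<pi> permutes {..<n}"
    and comm: "\<forall>a\<in>words n d. \<forall>b\<in>words n d.
        op_mult n d (perm_op \<pi>) X a b = op_mult n d X (perm_op \<pi>) a b"
    and a: "a \<in> words n d" and b: "b \<in> words n d"
  shows "X (a \<circ> \<pi>) (b \<circ> \<pi>) = X a b"
proof -
  have pi: "inv \<pi> permutes {..<n}" using permutes_inv[OF assms(1)] .
  have io: "\<pi> \<circ> inv \<pi> = id" "inv \<pi> \<circ> \<pi> = id" using permutes_inv_o[OF assms(1)] by auto
  have gen: "X (a \<circ> \<pi>) b' = X a (b' \<circ> inv \<pi>)" if b': "b' \<in> words n d" for b'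
  proof -
    have eq1: "(a = u \<circ> inv \<pi>) = (u = a \<circ> \<pi>)" for u
    proof
      assume "a = u \<circ> inv \<pi>" then have "a \<circ> \<pi> = u \<circ> (inv \<pi> \<circ> \<pi>)" by (simp add: comp_assoc)
      then show "u = a \<circ> \<pi>" using io by simp
    next
      assume "u = a \<circ> \<pi>" then show "a = u \<circ> inv \<pi>" using io by (simp add: comp_assoc)
    qed
    have "op_mult n d (perm_op \<pi>) X a b' = (\<Sum>u\<in>words n d. if u = a \<circ> \<pi> then X u b' else 0)"
      unfolding op_mult_def perm_op_def by (rule sum.cong) (auto simp: eq1)
    also have "\<dots> = X (a \<circ> \<pi>) b'"
      using words_comp[OF assms(1) a] finite_words by simp
    finally have l: "op_mult n d (perm_op \<pi>) X a b' = X (a \<circ> \<pi>) b'" .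
    have "op_mult n d X (perm_op \<pi>) a b' = (\<Sum>u\<in>words n d. if u = b' \<circ> inv \<pi> then X a u else 0)"
      unfolding op_mult_def perm_op_def by (rule sum.cong) auto
    also have "\<dots> = X a (b' \<circ> inv \<pi>)"
      using words_comp[OF pi b'] finite_words by simp
    finally show ?thesis using l comm a b' by metis
  qed
  have "X (a \<circ> \<pi>) (b \<circ> \<pi>) = X a (b \<circ> \<pi> \<circ> inv \<pi>)" using gen words_comp[OF assms(1) b] by blast
  also have "b \<circ> \<pi> \<circ> inv \<pi> = b" using io by (simp add: comp_assoc)
  finally show ?thesis .
qed

fun opow :: "nat \<Rightarrow> nat \<Rightarrow> op \<Rightarrow> nat \<Rightarrow> op" where
  "opow n d X 0 = (\<lambda>a b. if a = b then 1 else 0)"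
| "opow n d X (Suc k) = op_mult n d X (opow n d X k)"

lemma opow_inv:
  assumes "\<pi> permutes {..<n}"
    and inv: "\<And>a b. a \<in> words n d \<Longrightarrow> b \<in> words n d \<Longrightarrow> X (a \<circ> \<pi>) (b \<circ> \<pi>) = X a b"
  shows "a \<in> words n d \<Longrightarrow> b \<in> words n d \<Longrightarrow> opow n d X k (a \<circ> \<pi>) (b \<circ> \<pi>) = opow n d X k a b"
proof (induction k arbitrary: a b)
  case 0
  have "(a \<circ> \<pi> = b \<circ> \<pi>) = (a = b)"
  proof
    assume "a \<circ> \<pi> = b \<circ> \<pi>"
    then have "a \<circ> \<pi> \<circ> inv \<pi> = b \<circ> \<pi> \<circ> inv \<pi>" by simp
    then show "a = b" using permutes_inv_o[OF assms(1)] by (simp add: comp_assoc)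
  qed simp
  then show ?case by (simp del: comp_apply)
next
  case (Suc k)
  have "opow n d X (Suc k) (a \<circ> \<pi>) (b \<circ> \<pi>)
      = (\<Sum>u\<in>words n d. X (a \<circ> \<pi>) u * opow n d X k u (b \<circ> \<pi>))"
    by (simp add: op_mult_def)
  also have "\<dots> = (\<Sum>u\<in>words n d. X (a \<circ> \<pi>) (u \<circ> \<pi>) * opow n d X k (u \<circ> \<pi>) (b \<circ> \<pi>))"
    using sum.reindex_bij_betw[OF bij_comp[OF assms(1), of d],
        of "\<lambda>u. X (a \<circ> \<pi>) u * opow n d X k u (b \<circ> \<pi>)"] by simp
  also have "\<dots> = (\<Sum>u\<in>words n d. X a u * opow n d X k u b)"
    by (rule sum.cong) (auto simp: inv Suc)
  finally show ?case by (simp add: op_mult_def del: comp_apply)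
qed

lemma opow_eigen:
  assumes eig: "\<forall>a\<in>words n d. (\<Sum>u\<in>words n d. X a u * v u) = c * v a"
  shows "a \<in> words n d \<Longrightarrow> (\<Sum>u\<in>words n d. opow n d X k a u * v u) = c ^ k * v a"
proof (induction k arbitrary: a)
  case 0
  have "(\<Sum>u\<in>words n d. opow n d X 0 a u * v u) = (\<Sum>u\<in>words n d. if u = a then v u else 0)"
    by (rule sum.cong) auto
  then show ?case using 0 finite_words by simp
next
  case (Suc k)
  have "(\<Sum>u\<in>words n d. opow n d X (Suc k) a u * v u)
      = (\<Sum>u\<in>words n d. \<Sum>w\<in>words n d. X a w * opow n d X k w u * v u)"
    by (simp add: op_mult_def sum_distrib_right)
  also have "\<dots> = (\<Sum>w\<in>words n d. X a w * (\<Sum>u\<in>words n d. opow n d X k w u * v u))"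
    by (subst sum.swap) (simp add: sum_distrib_left mult.assoc)
  also have "\<dots> = (\<Sum>w\<in>words n d. X a w * (c ^ k * v w))"
    by (rule sum.cong) (auto simp: Suc)
  also have "\<dots> = c ^ k * (\<Sum>w\<in>words n d. X a w * v w)"
    by (simp add: sum_distrib_left mult.left_commute)
  also have "\<dots> = c ^ Suc k * v a" using eig Suc by simp
  finally show ?case .
qed

definition wl :: "nat \<Rightarrow> (nat \<Rightarrow> nat) \<Rightarrow> (nat \<Rightarrow> nat) \<Rightarrow> (nat \<times> nat) list" where
  "wl n a b = map (\<lambda>t. (a t, b t)) [0..<n]"

lemma orbit:
  assumes "a \<in> words n d" "b \<in> words n d" "a' \<in> words n d" "b' \<in> words n d"
    and "mset (wl n a b) = mset (wl n a' b')"
  shows "\<exists>p. p permutes {..<n} \<and> a' = a \<circ> p \<and> b' = b \<circ> p"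
proof -
  obtain p where p: "p permutes {..<length (wl n a b)}" "permute_list p (wl n a b) = wl n a' b'"
    using mset_eq_permutation[OF assms(5)[symmetric]] by blast
  have pp: "p permutes {..<n}" using p(1) by (simp add: wl_def)
  have "a' t = a (p t) \<and> b' t = b (p t)" for t
  proof (cases "t < n")
    case True
    have "permute_list p (wl n a b) ! t = wl n a' b' ! t" using p(2) by simp
    moreover have "p t < n" using pp True permutes_in_image[OF pp] by auto
    ultimately show ?thesis using True by (simp add: permute_list_def wl_def)
  next
    case False
    then show ?thesis using assms permutes_not_in[OF pp, of t] by (auto simp: words_def)
  qed
  then show ?thesis using pp by (intro exI[of _ p]) auto
qed


lemma msets_bound:
  fixes n d :: nat
  defines "Ms \<equiv> (\<lambda>(a,b). mset (wl n a b)) ` (words n d \<times> words n d)"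
  shows "finite Ms \<and> card Ms \<le> (n + 1) ^ (d * d)"
proof -
  define A where "A = {..<d} \<times> {..<d}"
  define \<phi> where "\<phi> M = (\<lambda>x\<in>A. count M x)" for M :: "(nat \<times> nat) multiset"
  have sub: "\<phi> ` Ms \<subseteq> PiE A (\<lambda>_. {..n})"
  proof
    fix y assume "y \<in> \<phi> ` Ms"
    then obtain a b where ab: "a \<in> words n d" "b \<in> words n d" "y = \<phi> (mset (wl n a b))"
      by (auto simp: Ms_def)
    have "count (mset (wl n a b)) x \<le> n" for x
      using count_le_size[of "mset (wl n a b)" x] by (simp add: wl_def)
    then show "y \<in> PiE A (\<lambda>_. {..n})" using ab by (auto simp: \<phi>_def)
  qed
  have setM: "set_mset M \<subseteq> A" if "M \<in> Ms" for M
    using that by (auto simp: Ms_def wl_def A_def words_def)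
  have inj: "inj_on \<phi> Ms"
  proof (rule inj_onI)
    fix M M' assume M: "M \<in> Ms" "M' \<in> Ms" "\<phi> M = \<phi> M'"
    show "M = M'"
    proof (rule multiset_eqI)
      fix x show "count M x = count M' x"
      proof (cases "x \<in> A")
        case True then show ?thesis using fun_cong[OF M(3), of x] by (simp add: \<phi>_def)
      next
        case False then show ?thesis using setM[OF M(1)] setM[OF M(2)]
          by (metis count_eq_zero_iff subsetD)
      qed
    qed
  qed
  have fin: "finite (PiE A (\<lambda>_. {..n}))" by (auto simp: A_def intro: finite_PiE)
  have "finite Ms" using inj fin sub by (metis finite_imageD finite_subset)
  moreover have "card Ms \<le> card (PiE A (\<lambda>_. {..n}))"
    using card_inj_on_le[OF inj sub fin] .
  moreover have "card (PiE A (\<lambda>_. {..n})) = (n + 1) ^ (d * d)"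
    by (simp add: card_PiE A_def)
  ultimately show ?thesis by simp
qed

theorem lemmaA1:
  fixes n d :: nat and X :: op
  assumes "\<And>\<pi>. \<pi> permutes {..<n} \<Longrightarrow>
     (\<forall>a\<in>words n d. \<forall>b\<in>words n d.
        op_mult n d (perm_op \<pi>) X a b = op_mult n d X (perm_op \<pi>) a b)"
  shows "finite (spec n d X) \<and>
         card (spec n d X) \<le> (n + 1) ^ d * (n + d) ^ (d ^ 2)"
proof -
  define Ms where "Ms = (\<lambda>(a,b). mset (wl n a b)) ` (words n d \<times> words n d)"
  have Msb: "finite Ms" "card Ms \<le> (n + 1) ^ (d * d)"
    using msets_bound[of n d] by (auto simp: Ms_def)
  define N where "N = card Ms"
  define rep where "rep M = (SOME p. p \<in> words n d \<times> words n d \<and> mset (wl n (fst p) (snd p)) = M)" for M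
  have rep: "rep M \<in> words n d \<times> words n d \<and> mset (wl n (fst (rep M)) (snd (rep M))) = M"
    if "M \<in> Ms" for M
    unfolding rep_def by (rule someI_ex) (use that in \<open>auto simp: Ms_def\<close>)
  have inv: "X (a \<circ> \<pi>) (b \<circ> \<pi>) = X a b"
    if "\<pi> permutes {..<n}" "a \<in> words n d" "b \<in> words n d" for \<pi> a b
    using invariance[OF that(1) assms[OF that(1)] that(2,3)] .
  define f where "f k M = opow n d X k (fst (rep M)) (snd (rep M))" for k M
  obtain cf where cf: "\<exists>k\<in>{..N}. cf k \<noteq> 0" "\<forall>M\<in>Ms. (\<Sum>k\<in>{..N}. cf k * f k M) = 0"
    using dep_lemma[OF Msb(1), of "{..N}" f] by (auto simp: N_def)
  have zero: "(\<Sum>k\<le>N. cf k * opow n d X k x y) = 0" if xy: "x \<in> words n d" "y \<in> words n d" for x y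
  proof -
    define M where "M = mset (wl n x y)"
    have MM: "M \<in> Ms" using xy by (auto simp: Ms_def M_def)
    obtain x' y' where r: "rep M = (x', y')" by fastforce
    have r': "x' \<in> words n d" "y' \<in> words n d" "mset (wl n x y) = mset (wl n x' y')"
      using rep[OF MM] r by (auto simp: M_def)
    obtain p where p: "p permutes {..<n}" "x' = x \<circ> p" "y' = y \<circ> p"
      using orbit[OF xy r'] by blast
    have "opow n d X k x' y' = opow n d X k x y" for k
      using opow_inv[OF p(1), of d X, OF inv[OF p(1)] xy] p by simp
    moreover have "(\<Sum>k\<le>N. cf k * opow n d X k x' y') = 0" using cf(2) MM r by (force simp: f_def)
    ultimately show ?thesis by simp
  qed
  have sub: "spec n d X \<subseteq> {z. (\<Sum>i\<le>N. cf i * z ^ i) = 0}"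
  proof
    fix c assume "c \<in> spec n d X"
    then obtain v w0 where v: "w0 \<in> words n d" "v w0 \<noteq> 0"
      "\<forall>a\<in>words n d. (\<Sum>u\<in>words n d. X a u * v u) = c * v a"
      unfolding spec_def by blast
    have "0 = (\<Sum>u\<in>words n d. (\<Sum>k\<le>N. cf k * opow n d X k w0 u) * v u)"
      using zero[OF v(1)] by simp
    also have "\<dots> = (\<Sum>k\<le>N. cf k * (\<Sum>u\<in>words n d. opow n d X k w0 u * v u))"
      by (simp add: sum_distrib_right sum_distrib_left mult.assoc sum.swap[of _ "words n d"])
    also have "\<dots> = (\<Sum>k\<le>N. cf k * c ^ k) * v w0"
      using opow_eigen[OF v(3) v(1)] by (simp add: sum_distrib_right mult.assoc)
    finally have "(\<Sum>k\<le>N. cf k * c ^ k) = 0" using v(2) by simp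
    then show "c \<in> {z. (\<Sum>i\<le>N. cf i * z ^ i) = 0}" by simp
  qed
  obtain k where k: "k \<le> N" "cf k \<noteq> 0" using cf(1) by auto
  have fin: "finite (spec n d X)"
    using finite_subset[OF sub polyfun_roots_finite[where c=cf and k=k and n=N, OF k(2,1)]] .
  have "card (spec n d X) \<le> N"
    using card_mono[OF polyfun_roots_finite[where c=cf and k=k and n=N, OF k(2,1)] sub] polyfun_roots_card[where c=cf and k=k and n=N, OF k(2,1)] by linarith
  also have "N \<le> (n + 1) ^ (d * d)" using Msb(2) by (simp add: N_def)
  also have "\<dots> \<le> (n + 1) ^ d * (n + d) ^ (d ^ 2)"
  proof (cases "d = 0")
    case True then show ?thesis by simp
  next
    case False
    have "(n + 1) ^ (d * d) \<le> (n + d) ^ (d ^ 2)"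
      using False by (simp add: power2_eq_square power_mono)
    also have "\<dots> \<le> (n + 1) ^ d * (n + d) ^ (d ^ 2)" by simp
    finally show ?thesis .
  qed
  finally show ?thesis using fin by simp
qed

end
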